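(* Let $U$ be an $M\times M$ unitary, let $\mathrm{in}=(s_1,\dots,s_N)$ be distinct input modes each containing one photon, and let $P(t)$ be the ideal boson-sampling output distribution and $P_a(t)$ the distinguishable-particle distribution (defined in the context). Then $$\epsilon:=\tfrac12\sum_t|P(t)-P_a(t)|\le\frac12\sum_{(j_1,\dots,j_N)\in[M]^N}\ \sum_{\rho\in S_N\setminus\{\mathrm{Id}\}}\ \prod_{i=1}^N|U_{j_i,s_i}|\,|U_{j_i,s_{\rho(i)}}|=\frac12\sum_{\emptyset\neq\mathcal I_C\subseteq[N]}\ \sum_{\substack{\rho:\ \rho(i)\neq i\ \forall i\in\mathcal I_C\\ \rho(i)=i\ \forall i\notin\mathcal I_C}}\ \sum_{(j_1,\dots,j_N)}\prod_{i}|U_{j_i,s_i}||U_{j_i,s_{\rho(i)}}|,$$ and in particular $\epsilon\le\frac12\sum_{\emptyset\ne\mathcal I_C\subseteq[N]}\prod_{i\in\mathcal I_C}C_i$, where $C_i=\sum_{j=1}^M\sum_{l\neq i}|U_{j,s_i}||U_{j,s_l}|$.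
   Context: Output patterns are tuples $t=(t_1,\dots,t_M)$ of nonnegative integers summing to $N$, with $t!=\prod_it_i!$ and $\mathrm{out}$ the list of $N$ modes in which photons are detected (mode $m$ repeated $t_m$ times). The ideal probability is $P(t)=\frac1{t!}\big|\sum_{\sigma\in S_N}\prod_{j=1}^NU_{\mathrm{out}_{\sigma(j)},s_j}\big|^2$ and the distinguishable-particle probability is $P_a(t)=\frac1{t!}\sum_{\sigma\in S_N}\prod_{j=1}^N|U_{\mathrm{out}_{\sigma(j)},s_j}|^2$, which is the distribution of the occupation pattern obtained by independently sampling, for each $j$, a mode $m$ with probability $|U_{m,s_j}|^2$. *)

theory Defs
  imports "HOL-Analysis.Analysis" "HOL-Combinatorics.Permutations"
begin

text \<open>Modes are indexed 0,...,M-1 and photons 0,...,N-1. A matrix is a function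
  nat => nat => complex, of which only the entries with indices < M matter.\<close>

definition unitary_mat :: "nat \<Rightarrow> (nat \<Rightarrow> nat \<Rightarrow> complex) \<Rightarrow> bool" where
  "unitary_mat M U \<longleftrightarrow>
     (\<forall>i<M. \<forall>j<M. (\<Sum>k<M. U k i * cnj (U k j)) = (if i = j then 1 else 0)) \<and>
     (\<forall>i<M. \<forall>j<M. (\<Sum>k<M. U i k * cnj (U j k)) = (if i = j then 1 else 0))"

definition patterns :: "nat \<Rightarrow> nat \<Rightarrow> (nat \<Rightarrow> nat) set" where
  "patterns M N = {t. (\<forall>m\<ge>M. t m = 0) \<and> (\<Sum>m<M. t m) = N}"

definition tfact :: "nat \<Rightarrow> (nat \<Rightarrow> nat) \<Rightarrow> real" where
  "tfact M t = (\<Prod>m<M. fact (t m))"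

definition outl :: "nat \<Rightarrow> (nat \<Rightarrow> nat) \<Rightarrow> nat list" where
  "outl M t = concat (map (\<lambda>m. replicate (t m) m) [0..<M])"

definition P_ideal :: "nat \<Rightarrow> nat \<Rightarrow> (nat \<Rightarrow> nat \<Rightarrow> complex) \<Rightarrow> (nat \<Rightarrow> nat) \<Rightarrow> (nat \<Rightarrow> nat) \<Rightarrow> real" where
  "P_ideal M N U s t = (1 / tfact M t) *
     (cmod (\<Sum>\<sigma>\<in>{\<sigma>. \<sigma> permutes {..<N}}. \<Prod>j<N. U (outl M t ! \<sigma> j) (s j)))\<^sup>2"

definition P_dist :: "nat \<Rightarrow> nat \<Rightarrow> (nat \<Rightarrow> nat \<Rightarrow> complex) \<Rightarrow> (nat \<Rightarrow> nat) \<Rightarrow> (nat \<Rightarrow> nat) \<Rightarrow> real" where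
  "P_dist M N U s t = (1 / tfact M t) *
     (\<Sum>\<sigma>\<in>{\<sigma>. \<sigma> permutes {..<N}}. \<Prod>j<N. (cmod (U (outl M t ! \<sigma> j) (s j)))\<^sup>2)"

definition tvd :: "nat \<Rightarrow> nat \<Rightarrow> (nat \<Rightarrow> nat \<Rightarrow> complex) \<Rightarrow> (nat \<Rightarrow> nat) \<Rightarrow> real" where
  "tvd M N U s = (1/2) * (\<Sum>t\<in>patterns M N. \<bar>P_ideal M N U s t - P_dist M N U s t\<bar>)"

definition Ccoef :: "nat \<Rightarrow> nat \<Rightarrow> (nat \<Rightarrow> nat \<Rightarrow> complex) \<Rightarrow> (nat \<Rightarrow> nat) \<Rightarrow> nat \<Rightarrow> real" where
  "Ccoef M N U s i = (\<Sum>j<M. \<Sum>l\<in>{..<N} - {i}. cmod (U j (s i)) * cmod (U j (s l)))"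

end

theory Submission
  imports Defs "HOL-Combinatorics.Multiset_Permutations"
begin

definition Fj :: "nat \<Rightarrow> (nat \<Rightarrow> nat \<Rightarrow> complex) \<Rightarrow> (nat \<Rightarrow> nat) \<Rightarrow> (nat \<Rightarrow> nat) \<Rightarrow> real" where
  "Fj N U s j = (\<Sum>\<rho>\<in>{\<rho>. \<rho> permutes {..<N} \<and> \<rho> \<noteq> id}.
      \<Prod>i<N. cmod (U (j i) (s i)) * cmod (U (j i) (s (\<rho> i))))"

lemma Fj_cong: assumes "\<And>i. i < N \<Longrightarrow> j i = j' i" shows "Fj N U s j = Fj N U s j'"
  unfolding Fj_def using assms by (intro sum.cong prod.cong) auto

lemma Fj_nonneg: "0 \<le> Fj N U s j"
  unfolding Fj_def by (intro sum_nonneg prod_nonneg) auto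

lemma perm_bound:
  fixes f :: "nat \<Rightarrow> nat"
  shows "\<bar>(cmod (\<Sum>\<sigma>\<in>{\<sigma>. \<sigma> permutes {..<N}}. \<Prod>j<N. U (f (\<sigma> j)) (s j)))\<^sup>2
           - (\<Sum>\<sigma>\<in>{\<sigma>. \<sigma> permutes {..<N}}. \<Prod>j<N. (cmod (U (f (\<sigma> j)) (s j)))\<^sup>2)\<bar>
     \<le> (\<Sum>\<sigma>\<in>{\<sigma>. \<sigma> permutes {..<N}}. Fj N U s (\<lambda>i. f (\<sigma> i)))"
proof -
  define P where "P = {\<sigma>. \<sigma> permutes {..<N}}"
  define A where "A \<sigma> = (\<Prod>j<N. U (f (\<sigma> j)) (s j))" for \<sigma>
  define W where "W \<sigma> \<rho> = (\<Prod>i<N. U (f (\<sigma> i)) (s i) * cnj (U (f (\<sigma> i)) (s (\<rho> i))))" for \<sigma> \<rho>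
  have finP: "finite P" unfolding P_def by (simp add: finite_permutations)
  have idP: "id \<in> P" unfolding P_def by (simp add: permutes_id)
  have key: "cnj (sum A P) = (\<Sum>\<rho>\<in>P. \<Prod>i<N. cnj (U (f (\<sigma> i)) (s (\<rho> i))))" if "\<sigma> \<in> P" for \<sigma>
  proof -
    have sp: "\<sigma> permutes {..<N}" using that P_def by simp
    have "cnj (sum A P) = (\<Sum>\<tau>\<in>P. cnj (A \<tau>))" by simp
    also have "\<dots> = (\<Sum>\<tau>\<in>P. cnj (A (\<sigma> \<circ> \<tau>)))" unfolding P_def
      by (rule setum_permutations_compose_left[OF sp])
    also have "\<dots> = (\<Sum>\<rho>\<in>P. cnj (A (\<sigma> \<circ> inv \<rho>)))" unfolding P_def
      by (rule sum_permutations_inverse)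
    also have "\<dots> = (\<Sum>\<rho>\<in>P. \<Prod>i<N. cnj (U (f (\<sigma> i)) (s (\<rho> i))))"
    proof (rule sum.cong[OF refl])
      fix \<rho> assume "\<rho> \<in> P"
      then have rp: "\<rho> permutes {..<N}" by (simp add: P_def)
      have "cnj (A (\<sigma> \<circ> inv \<rho>)) = (\<Prod>k<N. cnj (U (f (\<sigma> (inv \<rho> k))) (s k)))"
        by (simp add: A_def)
      also have "\<dots> = (\<Prod>i<N. cnj (U (f (\<sigma> (inv \<rho> (\<rho> i)))) (s (\<rho> i))))"
        using prod.permute[OF rp] by (simp add: o_def)
      also have "\<dots> = (\<Prod>i<N. cnj (U (f (\<sigma> i)) (s (\<rho> i))))"
        using permutes_inverses(2)[OF rp] by simp
      finally show "cnj (A (\<sigma> \<circ> inv \<rho>)) = (\<Prod>i<N. cnj (U (f (\<sigma> i)) (s (\<rho> i))))" .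
    qed
    finally show ?thesis .
  qed
  have sq: "complex_of_real ((cmod (sum A P))\<^sup>2) = (\<Sum>\<sigma>\<in>P. \<Sum>\<rho>\<in>P. W \<sigma> \<rho>)"
  proof -
    have "complex_of_real ((cmod (sum A P))\<^sup>2) = sum A P * cnj (sum A P)" by (rule complex_norm_square)
    also have "\<dots> = (\<Sum>\<sigma>\<in>P. A \<sigma> * cnj (sum A P))" by (simp add: sum_distrib_right)
    also have "\<dots> = (\<Sum>\<sigma>\<in>P. \<Sum>\<rho>\<in>P. W \<sigma> \<rho>)"
      by (rule sum.cong[OF refl], simp only: key) (simp add: A_def W_def sum_distrib_left prod.distrib)
    finally show ?thesis .
  qed
  have nsq: "U a b * cnj (U a b) = complex_of_real ((cmod (U a b))\<^sup>2)" for a b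
    by (rule complex_norm_square[symmetric])
  have dd: "complex_of_real (\<Sum>\<sigma>\<in>P. \<Prod>j<N. (cmod (U (f (\<sigma> j)) (s j)))\<^sup>2) = (\<Sum>\<sigma>\<in>P. W \<sigma> id)"
    unfolding W_def by (simp only: id_apply nsq of_real_sum of_real_prod)
  have rem: "(\<Sum>\<rho>\<in>P. W \<sigma> \<rho>) = W \<sigma> id + (\<Sum>\<rho>\<in>P-{id}. W \<sigma> \<rho>)" for \<sigma>
    by (rule sum.remove[OF finP idP])
  have eq: "complex_of_real ((cmod (sum A P))\<^sup>2 - (\<Sum>\<sigma>\<in>P. \<Prod>j<N. (cmod (U (f (\<sigma> j)) (s j)))\<^sup>2))
      = (\<Sum>\<sigma>\<in>P. \<Sum>\<rho>\<in>P-{id}. W \<sigma> \<rho>)"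
    by (simp only: of_real_diff sq dd rem sum.distrib) simp
  have nW: "cmod (W \<sigma> \<rho>) = (\<Prod>i<N. cmod (U (f (\<sigma> i)) (s i)) * cmod (U (f (\<sigma> i)) (s (\<rho> i))))" for \<sigma> \<rho>
    by (simp add: W_def prod_norm[symmetric] norm_mult)
  have PP: "{\<rho>. \<rho> permutes {..<N} \<and> \<rho> \<noteq> id} = P - {id}" by (auto simp: P_def)
  have "\<bar>(cmod (sum A P))\<^sup>2 - (\<Sum>\<sigma>\<in>P. \<Prod>j<N. (cmod (U (f (\<sigma> j)) (s j)))\<^sup>2)\<bar>
      = cmod (\<Sum>\<sigma>\<in>P. \<Sum>\<rho>\<in>P-{id}. W \<sigma> \<rho>)"
    by (simp only: eq[symmetric] norm_of_real)
  also have "\<dots> \<le> (\<Sum>\<sigma>\<in>P. \<Sum>\<rho>\<in>P-{id}. cmod (W \<sigma> \<rho>))"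
    by (rule order_trans[OF norm_sum sum_mono[OF norm_sum]])
  also have "\<dots> = (\<Sum>\<sigma>\<in>P. Fj N U s (\<lambda>i. f (\<sigma> i)))"
    by (simp only: nW Fj_def PP)
  finally show ?thesis unfolding P_def A_def .
qed


lemma fiber_sum:
  fixes G :: "'a list \<Rightarrow> real" and xs :: "'a list"
  shows "(\<Sum>\<sigma>\<in>{\<sigma>. \<sigma> permutes {..<length xs}}. G (permute_list \<sigma> xs))
     = real (\<Prod>x\<in>set_mset (mset xs). fact (count (mset xs) x)) *
       (\<Sum>ys\<in>permutations_of_multiset (mset xs). G ys)"
proof -
  define n where "n = length xs"
  define P where "P = {\<sigma>. \<sigma> permutes {..<n}}"
  define Q where "Q = permutations_of_multiset (mset xs)"
  define fib where "fib ys = {\<sigma>\<in>P. permute_list \<sigma> xs = ys}" for ys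
  have finP: "finite P" by (simp add: P_def finite_permutations)
  have finQ: "finite Q" by (simp add: Q_def)
  have img: "(\<lambda>\<sigma>. permute_list \<sigma> xs) ` P \<subseteq> Q"
    by (auto simp: P_def Q_def n_def permutations_of_multiset_def)
  have grp: "(\<Sum>\<sigma>\<in>P. H (permute_list \<sigma> xs)) = (\<Sum>ys\<in>Q. real (card (fib ys)) * H ys)"
    for H :: "'a list \<Rightarrow> real"
  proof -
    have "(\<Sum>\<sigma>\<in>P. H (permute_list \<sigma> xs)) = (\<Sum>ys\<in>Q. \<Sum>\<sigma>\<in>fib ys. H (permute_list \<sigma> xs))"
      unfolding fib_def by (rule sum.group[OF finP finQ img, symmetric])
    also have "\<dots> = (\<Sum>ys\<in>Q. real (card (fib ys)) * H ys)"
    proof (rule sum.cong[OF refl])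
      fix ys
      have "(\<Sum>\<sigma>\<in>fib ys. H (permute_list \<sigma> xs)) = (\<Sum>\<sigma>\<in>fib ys. H ys)"
        by (rule sum.cong) (auto simp: fib_def)
      then show "(\<Sum>\<sigma>\<in>fib ys. H (permute_list \<sigma> xs)) = real (card (fib ys)) * H ys" by simp
    qed
    finally show ?thesis .
  qed
  have fibc: "card (fib ys) = card (fib xs)" if "ys \<in> Q" for ys
  proof -
    from that have "mset ys = mset xs" by (simp add: Q_def permutations_of_multiset_def)
    then obtain p where p: "p permutes {..<length xs}" "permute_list p xs = ys"
      by (rule mset_eq_permutation)
    have pi: "inv p permutes {..<length xs}" using p(1) by (rule permutes_inv)
    have "bij_betw (\<lambda>\<tau>. \<tau> \<circ> p) (fib xs) (fib ys)"
    proof (rule bij_betw_byWitness[where f'="\<lambda>\<sigma>. \<sigma> \<circ> inv p"])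
      show "\<forall>a\<in>fib xs. a \<circ> p \<circ> inv p = a"
        using permutes_inv_o(1)[OF p(1)] by (simp add: o_assoc[symmetric])
      show "\<forall>a\<in>fib ys. a \<circ> inv p \<circ> p = a"
        using permutes_inv_o(2)[OF p(1)] by (simp add: o_assoc[symmetric])
      show "(\<lambda>\<tau>. \<tau> \<circ> p) ` fib xs \<subseteq> fib ys"
        using p by (auto simp: fib_def P_def n_def permute_list_compose intro: permutes_compose)
      have "permute_list (\<sigma> \<circ> inv p) xs = xs" if "permute_list \<sigma> xs = ys" for \<sigma>
      proof -
        have "permute_list (\<sigma> \<circ> inv p) xs = permute_list (inv p) (permute_list p xs)"
          using pi that p(2) by (simp add: permute_list_compose)
        also have "\<dots> = permute_list (p \<circ> inv p) xs"
          using pi by (simp add: permute_list_compose)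
        also have "\<dots> = xs" using permutes_inv_o(1)[OF p(1)] by simp
        finally show ?thesis .
      qed
      then show "(\<lambda>\<sigma>. \<sigma> \<circ> inv p) ` fib ys \<subseteq> fib xs"
        using pi by (auto simp: fib_def P_def n_def intro: permutes_compose)
    qed
    then show ?thesis by (metis bij_betw_same_card)
  qed
  have xsQ: "xs \<in> Q" by (simp add: Q_def permutations_of_multiset_def)
  have cQ: "card Q > 0" using finQ xsQ by (auto simp: card_gt_0_iff)
  have "real (card P) = (\<Sum>\<sigma>\<in>P. (\<lambda>_. 1::real) (permute_list \<sigma> xs))" by simp
  also have "\<dots> = (\<Sum>ys\<in>Q. real (card (fib xs)))" using grp[of "\<lambda>_. 1"] fibc by simp
  finally have "real (card P) = real (card Q) * real (card (fib xs))" by simp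
  moreover have "card P = fact n" unfolding P_def by (rule card_permutations) auto
  moreover have "card Q * (\<Prod>x\<in>set_mset (mset xs). fact (count (mset xs) x)) = fact n"
    unfolding Q_def n_def using card_permutations_of_multiset_aux[of "mset xs"] by simp
  ultimately have "real (card Q) * real (card (fib xs)) = real (card Q) * real (\<Prod>x\<in>set_mset (mset xs). fact (count (mset xs) x))"
    by (metis of_nat_mult)
  then have "real (card (fib xs)) = real (\<Prod>x\<in>set_mset (mset xs). fact (count (mset xs) x))"
    using cQ by (metis mult_cancel_left of_nat_0_less_iff less_irrefl)
  then have cf: "card (fib xs) = (\<Prod>x\<in>set_mset (mset xs). fact (count (mset xs) x))"
    by (metis of_nat_eq_iff)
  have "(\<Sum>\<sigma>\<in>P. G (permute_list \<sigma> xs)) = (\<Sum>ys\<in>Q. real (\<Prod>x\<in>set_mset (mset xs). fact (count (mset xs) x)) * G ys)"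
    unfolding grp by (rule sum.cong[OF refl]) (simp add: fibc cf)
  then show ?thesis by (simp add: P_def Q_def n_def sum_distrib_left)
qed


lemma outl_Suc: "outl (Suc M) t = outl M t @ replicate (t M) M"
  by (simp add: outl_def)

lemma outl_0: "outl 0 t = []"
  by (simp add: outl_def)

lemma count_outl: "count (mset (outl M t)) m = (if m < M then t m else 0)"
  by (induction M) (auto simp: outl_Suc outl_0)

lemma set_outl: "set (outl M t) \<subseteq> {..<M}"
  by (induction M) (auto simp: outl_Suc outl_0)

lemma length_outl: "length (outl M t) = (\<Sum>m<M. t m)"
  by (induction M) (auto simp: outl_Suc outl_0)

lemma outl_len: "t \<in> patterns M N \<Longrightarrow> length (outl M t) = N"
  by (simp add: patterns_def length_outl)

lemma count_outl_pat: "t \<in> patterns M N \<Longrightarrow> count (mset (outl M t)) = t"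
  by (auto simp: fun_eq_iff count_outl patterns_def)

lemma tfact_eq: assumes "t \<in> patterns M N"
  shows "tfact M t = real (\<Prod>x\<in>set_mset (mset (outl M t)). fact (count (mset (outl M t)) x))"
proof -
  have "(\<Prod>x\<in>set_mset (mset (outl M t)). fact (count (mset (outl M t)) x))
      = (\<Prod>m<M. fact (count (mset (outl M t)) m))"
    by (rule prod.mono_neutral_left) (use set_outl in \<open>auto simp: count_mset_0_iff[THEN iffD2]\<close>)
  also have "\<dots> = (\<Prod>m<M. fact (t m))" by (simp add: count_outl)
  finally have e: "(\<Prod>x\<in>set_mset (mset (outl M t)). fact (count (mset (outl M t)) x)) = (\<Prod>m<M. fact (t m))" .
  show ?thesis unfolding tfact_def e by (simp only: of_nat_prod of_nat_fact)
qed

lemma tfact_pos: "tfact M t > 0"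
  by (simp add: tfact_def prod_pos)

lemma sum_patterns:
  fixes F :: "(nat \<Rightarrow> nat) \<Rightarrow> real"
  assumes Fc: "\<And>j j'. (\<And>i. i < N \<Longrightarrow> j i = j' i) \<Longrightarrow> F j = F j'"
  shows "(\<Sum>t\<in>patterns M N. (1 / tfact M t) * (\<Sum>\<sigma>\<in>{\<sigma>. \<sigma> permutes {..<N}}. F (\<lambda>i. outl M t ! \<sigma> i)))
       = (\<Sum>j\<in>PiE {..<N} (\<lambda>_. {..<M}). F j)"
proof -
  define L where "L = {ys. set ys \<subseteq> {..<M} \<and> length ys = N}"
  define G where "G ys = F (\<lambda>i. ys ! i)" for ys
  have finL: "finite L" unfolding L_def by (rule finite_lists_length_eq) simp
  have cL: "(\<lambda>ys. count (mset ys)) ` L \<subseteq> patterns M N"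
  proof
    fix t assume "t \<in> (\<lambda>ys. count (mset ys)) ` L"
    then obtain ys where ys: "ys \<in> L" "t = count (mset ys)" by auto
    have "t m = 0" if "m \<ge> M" for m using ys that by (auto simp: L_def)
    moreover have "(\<Sum>m<M. t m) = N" using ys sum_count_set[of ys "{..<M}"]
      by (simp add: L_def count_mset)
    ultimately show "t \<in> patterns M N" by (simp add: patterns_def)
  qed
  have patsub: "patterns M N \<subseteq> (\<lambda>ys. count (mset ys)) ` L"
  proof
    fix t assume t: "t \<in> patterns M N"
    then have "outl M t \<in> L" using set_outl outl_len by (auto simp: L_def)
    moreover have "t = count (mset (outl M t))" using count_outl_pat[OF t] by simp
    ultimately show "t \<in> (\<lambda>ys. count (mset ys)) ` L" by blast
  qed
  have finT: "finite (patterns M N)" using finite_subset[OF patsub] finL by blast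
  have per_t: "(1 / tfact M t) * (\<Sum>\<sigma>\<in>{\<sigma>. \<sigma> permutes {..<N}}. F (\<lambda>i. outl M t ! \<sigma> i))
        = (\<Sum>ys\<in>{ys\<in>L. count (mset ys) = t}. G ys)" if t: "t \<in> patterns M N" for t
  proof -
    define xs where "xs = outl M t"
    have lx: "length xs = N" using outl_len[OF t] by (simp add: xs_def)
    have "(\<Sum>\<sigma>\<in>{\<sigma>. \<sigma> permutes {..<N}}. F (\<lambda>i. xs ! \<sigma> i))
        = (\<Sum>\<sigma>\<in>{\<sigma>. \<sigma> permutes {..<length xs}}. G (permute_list \<sigma> xs))"
      unfolding lx G_def
      by (rule sum.cong[OF refl], rule Fc) (simp add: permute_list_nth lx)
    also have "\<dots> = tfact M t * (\<Sum>ys\<in>permutations_of_multiset (mset xs). G ys)"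
      by (simp only: fiber_sum tfact_eq[OF t] xs_def)
    also have "permutations_of_multiset (mset xs) = {ys\<in>L. count (mset ys) = t}"
    proof -
      have "ys \<in> permutations_of_multiset (mset xs) \<longleftrightarrow> ys \<in> L \<and> count (mset ys) = t" for ys
      proof
        assume "ys \<in> permutations_of_multiset (mset xs)"
        then have m: "mset ys = mset xs" by (simp add: permutations_of_multiset_def)
        then have "set ys = set xs" "length ys = length xs" by (metis mset_eq_setD, metis size_mset)
        then show "ys \<in> L \<and> count (mset ys) = t"
          using m set_outl[of M t] lx count_outl_pat[OF t] by (auto simp: L_def xs_def)
      next
        assume "ys \<in> L \<and> count (mset ys) = t"
        then have "count (mset ys) = count (mset xs)" using count_outl_pat[OF t] by (simp add: xs_def)
        then show "ys \<in> permutations_of_multiset (mset xs)"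
          by (simp add: permutations_of_multiset_def count_inject)
      qed
      then show ?thesis by blast
    qed
    finally show ?thesis using tfact_pos[of M t] by (simp add: xs_def)
  qed
  have "(\<Sum>t\<in>patterns M N. (1 / tfact M t) * (\<Sum>\<sigma>\<in>{\<sigma>. \<sigma> permutes {..<N}}. F (\<lambda>i. outl M t ! \<sigma> i)))
      = (\<Sum>t\<in>patterns M N. \<Sum>ys\<in>{ys\<in>L. count (mset ys) = t}. G ys)"
    by (rule sum.cong[OF refl]) (rule per_t)
  also have "\<dots> = (\<Sum>ys\<in>L. G ys)" by (rule sum.group[OF finL finT cL])
  also have "\<dots> = (\<Sum>j\<in>PiE {..<N} (\<lambda>_. {..<M}). F j)"
  proof (rule sum.reindex_bij_witness[where j="\<lambda>ys. restrict (\<lambda>k. ys ! k) {..<N}" and i="\<lambda>j. map j [0..<N]"])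
    fix ys assume "ys \<in> L"
    then show "map (restrict (\<lambda>k. ys ! k) {..<N}) [0..<N] = ys"
      by (auto simp: L_def intro: nth_equalityI)
    have "ys ! k < M" if "k < N" for k
      using that \<open>ys \<in> L\<close> nth_mem unfolding L_def by blast
    then show "restrict (\<lambda>k. ys ! k) {..<N} \<in> PiE {..<N} (\<lambda>_. {..<M})"
      by auto
    show "F (restrict (\<lambda>k. ys ! k) {..<N}) = G ys"
      unfolding G_def by (rule Fc) simp
  next
    fix f assume f: "f \<in> PiE {..<N} (\<lambda>_. {..<M})"
    then show "restrict (\<lambda>k. map f [0..<N] ! k) {..<N} = f"
      by (auto simp: PiE_def extensional_def fun_eq_iff)
    from f show "map f [0..<N] \<in> L"
      by (auto simp: L_def PiE_def Pi_def)
  qed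
  finally show ?thesis .
qed

lemma regroup:
  fixes X :: "(nat \<Rightarrow> nat) \<Rightarrow> (nat \<Rightarrow> nat) \<Rightarrow> real" and J :: "(nat \<Rightarrow> nat) set"
  shows "(\<Sum>j\<in>J. \<Sum>\<rho>\<in>{\<rho>. \<rho> permutes {..<N} \<and> \<rho> \<noteq> id}. X j \<rho>)
    = (\<Sum>I\<in>{I. I \<subseteq> {..<N} \<and> I \<noteq> {}}.
         \<Sum>\<rho>\<in>{\<rho>. \<rho> permutes {..<N} \<and> (\<forall>i\<in>I. \<rho> i \<noteq> i) \<and> (\<forall>i\<in>{..<N} - I. \<rho> i = i)}.
           \<Sum>j\<in>J. X j \<rho>)"
proof -
  define R where "R = {\<rho>. \<rho> permutes {..<N} \<and> \<rho> \<noteq> id}"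
  define T where "T = {I. I \<subseteq> {..<N} \<and> I \<noteq> {}}"
  define supp where "supp \<rho> = {i\<in>{..<N}. \<rho> i \<noteq> i}" for \<rho> :: "nat \<Rightarrow> nat"
  have finR: "finite R" unfolding R_def
    by (rule finite_subset[OF _ finite_permutations[of "{..<N}"]]) auto
  have finT: "finite T" unfolding T_def by (rule finite_subset[of _ "Pow {..<N}"]) auto
  have img: "supp ` R \<subseteq> T"
  proof
    fix I assume "I \<in> supp ` R"
    then obtain \<rho> where \<rho>: "\<rho> permutes {..<N}" "\<rho> \<noteq> id" "I = supp \<rho>" by (auto simp: R_def)
    have "I \<noteq> {}"
    proof
      assume "I = {}"
      then have "\<rho> i = i" for i
        using \<rho> permutes_not_in[OF \<rho>(1), of i] by (cases "i < N") (auto simp: supp_def)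
      then show False using \<rho>(2) by (auto simp: fun_eq_iff)
    qed
    then show "I \<in> T" using \<rho> by (auto simp: T_def supp_def)
  qed
  have fib: "{\<rho>\<in>R. supp \<rho> = I}
      = {\<rho>. \<rho> permutes {..<N} \<and> (\<forall>i\<in>I. \<rho> i \<noteq> i) \<and> (\<forall>i\<in>{..<N} - I. \<rho> i = i)}"
    if "I \<in> T" for I
  proof (rule set_eqI, rule iffI)
    fix \<rho> assume "\<rho> \<in> {\<rho>\<in>R. supp \<rho> = I}"
    then show "\<rho> \<in> {\<rho>. \<rho> permutes {..<N} \<and> (\<forall>i\<in>I. \<rho> i \<noteq> i) \<and> (\<forall>i\<in>{..<N} - I. \<rho> i = i)}"
      by (auto simp: R_def supp_def)
  next
    fix \<rho> assume a: "\<rho> \<in> {\<rho>. \<rho> permutes {..<N} \<and> (\<forall>i\<in>I. \<rho> i \<noteq> i) \<and> (\<forall>i\<in>{..<N} - I. \<rho> i = i)}"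
    from that obtain i0 where "i0 \<in> I" by (auto simp: T_def)
    then have "\<rho> \<noteq> id" using a by auto
    moreover have "supp \<rho> = I" using a that by (auto simp: supp_def T_def)
    ultimately show "\<rho> \<in> {\<rho>\<in>R. supp \<rho> = I}" using a by (auto simp: R_def)
  qed
  have "(\<Sum>j\<in>J. \<Sum>\<rho>\<in>R. X j \<rho>) = (\<Sum>\<rho>\<in>R. \<Sum>j\<in>J. X j \<rho>)" by (rule sum.swap)
  also have "\<dots> = (\<Sum>I\<in>T. \<Sum>\<rho>\<in>{\<rho>\<in>R. supp \<rho> = I}. \<Sum>j\<in>J. X j \<rho>)"
    by (rule sum.group[OF finR finT img, symmetric])
  also have "\<dots> = (\<Sum>I\<in>T. \<Sum>\<rho>\<in>{\<rho>. \<rho> permutes {..<N} \<and> (\<forall>i\<in>I. \<rho> i \<noteq> i) \<and> (\<forall>i\<in>{..<N} - I. \<rho> i = i)}.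
           \<Sum>j\<in>J. X j \<rho>)"
    by (rule sum.cong[OF refl]) (simp only: fib)
  finally show ?thesis unfolding R_def T_def .
qed

lemma bound_I:
  assumes U: "unitary_mat M U" and s: "\<forall>j<N. s j < M" and I: "I \<subseteq> {..<N}"
  shows "(\<Sum>\<rho>\<in>{\<rho>. \<rho> permutes {..<N} \<and> (\<forall>i\<in>I. \<rho> i \<noteq> i) \<and> (\<forall>i\<in>{..<N} - I. \<rho> i = i)}.
            \<Sum>j\<in>PiE {..<N} (\<lambda>_. {..<M}). \<Prod>i<N. cmod (U (j i) (s i)) * cmod (U (j i) (s (\<rho> i))))
        \<le> (\<Prod>i\<in>I. Ccoef M N U s i)"
proof -
  define RI where "RI = {\<rho>. \<rho> permutes {..<N} \<and> (\<forall>i\<in>I. \<rho> i \<noteq> i) \<and> (\<forall>i\<in>{..<N} - I. \<rho> i = i)}"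
  define g where "g i l = (\<Sum>m<M. cmod (U m (s i)) * cmod (U m (s l)))" for i l
  have finI: "finite I" using I finite_subset by blast
  have g1: "g i i = 1" if "i < N" for i
  proof -
    have si: "s i < M" using s that by auto
    have "(\<Sum>k<M. U k (s i) * cnj (U k (s i))) = 1" using U si by (simp add: unitary_mat_def)
    moreover have "(\<Sum>k<M. U k (s i) * cnj (U k (s i))) = complex_of_real (\<Sum>k<M. (cmod (U k (s i)))\<^sup>2)"
      by (simp only: of_real_sum complex_norm_square)
    ultimately have "(\<Sum>k<M. (cmod (U k (s i)))\<^sup>2) = 1" by (metis of_real_eq_1_iff)
    then show ?thesis by (simp add: g_def power2_eq_square)
  qed
  have prodj: "(\<Sum>j\<in>PiE {..<N} (\<lambda>_. {..<M}). \<Prod>i<N. cmod (U (j i) (s i)) * cmod (U (j i) (s (\<rho> i))))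
      = (\<Prod>i\<in>I. g i (\<rho> i))" if "\<rho> \<in> RI" for \<rho>
  proof -
    have "(\<Sum>j\<in>PiE {..<N} (\<lambda>_. {..<M}). \<Prod>i<N. cmod (U (j i) (s i)) * cmod (U (j i) (s (\<rho> i))))
        = (\<Prod>i<N. g i (\<rho> i))"
      unfolding g_def
      by (rule prod_sum_PiE[of "{..<N}" "\<lambda>_. {..<M}" "\<lambda>i m. cmod (U m (s i)) * cmod (U m (s (\<rho> i)))", symmetric]) auto
    also have "\<dots> = (\<Prod>i\<in>I. g i (\<rho> i))"
      by (rule prod.mono_neutral_right) (use I that g1 in \<open>auto simp: RI_def\<close>)
    finally show ?thesis .
  qed
  have inj: "inj_on (\<lambda>\<rho>. restrict \<rho> I) RI"
  proof (rule inj_onI)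
    fix \<rho> \<rho>' assume a: "\<rho> \<in> RI" "\<rho>' \<in> RI" "restrict \<rho> I = restrict \<rho>' I"
    show "\<rho> = \<rho>'"
    proof
      fix i show "\<rho> i = \<rho>' i"
      proof (cases "i \<in> I")
        case True then show ?thesis using a(3) by (metis restrict_apply')
      next
        case False
        show ?thesis
        proof (cases "i < N")
          case True then show ?thesis using a False by (auto simp: RI_def)
        next
          case F2: False
          then have "\<rho> i = i" "\<rho>' i = i"
            using a permutes_not_in[of \<rho> "{..<N}" i] permutes_not_in[of \<rho>' "{..<N}" i]
            by (auto simp: RI_def)
          then show ?thesis by simp
        qed
      qed
    qed
  qed
  have sub: "(\<lambda>\<rho>. restrict \<rho> I) ` RI \<subseteq> PiE I (\<lambda>i. {..<N} - {i})"
  proof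
    fix f assume "f \<in> (\<lambda>\<rho>. restrict \<rho> I) ` RI"
    then obtain \<rho> where r: "\<rho> \<in> RI" "f = restrict \<rho> I" by auto
    have "\<rho> i \<in> {..<N} - {i}" if "i \<in> I" for i
      using r(1) that I permutes_in_image[of \<rho> "{..<N}" i] by (auto simp: RI_def)
    then show "f \<in> PiE I (\<lambda>i. {..<N} - {i})" using r(2) by auto
  qed
  have gnn: "0 \<le> g i l" for i l unfolding g_def by (intro sum_nonneg) auto
  have "(\<Sum>\<rho>\<in>RI. \<Sum>j\<in>PiE {..<N} (\<lambda>_. {..<M}). \<Prod>i<N. cmod (U (j i) (s i)) * cmod (U (j i) (s (\<rho> i))))
      = (\<Sum>\<rho>\<in>RI. \<Prod>i\<in>I. g i (\<rho> i))" by (rule sum.cong[OF refl]) (rule prodj)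
  also have "\<dots> = (\<Sum>\<rho>\<in>RI. \<Prod>i\<in>I. g i (restrict \<rho> I i))"
    by (rule sum.cong[OF refl], rule prod.cong[OF refl]) simp
  also have "\<dots> = (\<Sum>f\<in>(\<lambda>\<rho>. restrict \<rho> I) ` RI. \<Prod>i\<in>I. g i (f i))"
    by (rule sum.reindex[OF inj, symmetric, unfolded o_def])
  also have "\<dots> \<le> (\<Sum>f\<in>PiE I (\<lambda>i. {..<N} - {i}). \<Prod>i\<in>I. g i (f i))"
    by (rule sum_mono2) (use sub finI gnn in \<open>auto intro!: prod_nonneg finite_PiE\<close>)
  also have "\<dots> = (\<Prod>i\<in>I. \<Sum>l\<in>{..<N} - {i}. g i l)"
    by (rule prod_sum_PiE[symmetric]) (use finI in auto)
  also have "\<dots> = (\<Prod>i\<in>I. Ccoef M N U s i)"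
    by (rule prod.cong[OF refl]) (unfold g_def Ccoef_def, rule sum.swap)
  finally show ?thesis unfolding RI_def .
qed
theorem mainTheorem6:
  fixes M N :: nat and U :: "nat \<Rightarrow> nat \<Rightarrow> complex" and s :: "nat \<Rightarrow> nat"
  assumes "unitary_mat M U"
    and "\<forall>j<N. s j < M"
    and "inj_on s {..<N}"
  shows "tvd M N U s \<le> (1/2) * (\<Sum>j\<in>PiE {..<N} (\<lambda>_. {..<M}).
            \<Sum>\<rho>\<in>{\<rho>. \<rho> permutes {..<N} \<and> \<rho> \<noteq> id}.
              \<Prod>i<N. cmod (U (j i) (s i)) * cmod (U (j i) (s (\<rho> i))))
    \<and> (1/2) * (\<Sum>j\<in>PiE {..<N} (\<lambda>_. {..<M}).
            \<Sum>\<rho>\<in>{\<rho>. \<rho> permutes {..<N} \<and> \<rho> \<noteq> id}.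
              \<Prod>i<N. cmod (U (j i) (s i)) * cmod (U (j i) (s (\<rho> i))))
      = (1/2) * (\<Sum>I\<in>{I. I \<subseteq> {..<N} \<and> I \<noteq> {}}.
            \<Sum>\<rho>\<in>{\<rho>. \<rho> permutes {..<N} \<and> (\<forall>i\<in>I. \<rho> i \<noteq> i) \<and> (\<forall>i\<in>{..<N} - I. \<rho> i = i)}.
              \<Sum>j\<in>PiE {..<N} (\<lambda>_. {..<M}).
                \<Prod>i<N. cmod (U (j i) (s i)) * cmod (U (j i) (s (\<rho> i))))
    \<and> tvd M N U s \<le> (1/2) * (\<Sum>I\<in>{I. I \<subseteq> {..<N} \<and> I \<noteq> {}}. \<Prod>i\<in>I. Ccoef M N U s i)"
proof -
  define B1 where "B1 = (\<Sum>j\<in>PiE {..<N} (\<lambda>_. {..<M}).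
            \<Sum>\<rho>\<in>{\<rho>. \<rho> permutes {..<N} \<and> \<rho> \<noteq> id}.
              \<Prod>i<N. cmod (U (j i) (s i)) * cmod (U (j i) (s (\<rho> i))))"
  define B2 where "B2 = (\<Sum>I\<in>{I. I \<subseteq> {..<N} \<and> I \<noteq> {}}.
            \<Sum>\<rho>\<in>{\<rho>. \<rho> permutes {..<N} \<and> (\<forall>i\<in>I. \<rho> i \<noteq> i) \<and> (\<forall>i\<in>{..<N} - I. \<rho> i = i)}.
              \<Sum>j\<in>PiE {..<N} (\<lambda>_. {..<M}).
                \<Prod>i<N. cmod (U (j i) (s i)) * cmod (U (j i) (s (\<rho> i))))"
  have pt: "\<bar>P_ideal M N U s t - P_dist M N U s t\<bar>
      \<le> (1 / tfact M t) * (\<Sum>\<sigma>\<in>{\<sigma>. \<sigma> permutes {..<N}}. Fj N U s (\<lambda>i. outl M t ! \<sigma> i))" for t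
  proof -
    have tp: "tfact M t > 0" by (rule tfact_pos)
    have "P_ideal M N U s t - P_dist M N U s t = (1 / tfact M t) *
       ((cmod (\<Sum>\<sigma>\<in>{\<sigma>. \<sigma> permutes {..<N}}. \<Prod>j<N. U (outl M t ! \<sigma> j) (s j)))\<^sup>2
           - (\<Sum>\<sigma>\<in>{\<sigma>. \<sigma> permutes {..<N}}. \<Prod>j<N. (cmod (U (outl M t ! \<sigma> j) (s j)))\<^sup>2))"
      by (simp add: P_ideal_def P_dist_def right_diff_distrib)
    then have "\<bar>P_ideal M N U s t - P_dist M N U s t\<bar> = (1 / tfact M t) *
       \<bar>(cmod (\<Sum>\<sigma>\<in>{\<sigma>. \<sigma> permutes {..<N}}. \<Prod>j<N. U (outl M t ! \<sigma> j) (s j)))\<^sup>2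
           - (\<Sum>\<sigma>\<in>{\<sigma>. \<sigma> permutes {..<N}}. \<Prod>j<N. (cmod (U (outl M t ! \<sigma> j) (s j)))\<^sup>2)\<bar>"
      using tp by (simp add: abs_mult)
    also have "\<dots> \<le> (1 / tfact M t) * (\<Sum>\<sigma>\<in>{\<sigma>. \<sigma> permutes {..<N}}. Fj N U s (\<lambda>i. outl M t ! \<sigma> i))"
      using perm_bound[where f="\<lambda>k. outl M t ! k" and N=N and U=U and s=s] tp by (intro mult_left_mono) auto
    finally show ?thesis .
  qed
  have part1: "tvd M N U s \<le> (1/2) * B1"
  proof -
    have "(\<Sum>t\<in>patterns M N. \<bar>P_ideal M N U s t - P_dist M N U s t\<bar>)
        \<le> (\<Sum>t\<in>patterns M N. (1 / tfact M t) * (\<Sum>\<sigma>\<in>{\<sigma>. \<sigma> permutes {..<N}}. Fj N U s (\<lambda>i. outl M t ! \<sigma> i)))"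
      by (rule sum_mono) (rule pt)
    also have "\<dots> = (\<Sum>j\<in>PiE {..<N} (\<lambda>_. {..<M}). Fj N U s j)"
      by (rule sum_patterns) (rule Fj_cong)
    also have "\<dots> = B1" by (simp add: B1_def Fj_def)
    finally show ?thesis unfolding tvd_def by simp
  qed
  have part2: "B1 = B2" unfolding B1_def B2_def by (rule regroup)
  have part3: "B2 \<le> (\<Sum>I\<in>{I. I \<subseteq> {..<N} \<and> I \<noteq> {}}. \<Prod>i\<in>I. Ccoef M N U s i)"
    unfolding B2_def by (rule sum_mono) (use assms(1,2) bound_I in auto)
  show ?thesis
    using part1 part2 part3 unfolding B1_def[symmetric] B2_def[symmetric] by auto
qed

end
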